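(* Consider the simulated dynamics: $\boldsymbol{w}_i(t+1)=\boldsymbol{w}_i(t)-\eta\,a_i(t)\frac1n\sum_{j=1}^n(\boldsymbol{a}(t)^\top\boldsymbol{W}(t)\boldsymbol{x}_j-y_j)\boldsymbol{x}_j$ for the rows $\boldsymbol{w}_i$ of $\boldsymbol{W}\in\mathbb{R}^{m\times d}$, and $a_i(t+1)=a_i(t)+\delta_i(t)$, where $\delta_i(t)=-\eta^{1/4}$ if $a_i(t)=\eta^{1/4}$, $\delta_i(t)=\eta^{1/4}$ if $a_i(t)=-\eta^{1/4}$, and $\delta_i(t)$ is uniform on $\{-\eta^{1/4},\eta^{1/4}\}$ (independently) if $a_i(t)=0$, with $a_i(0)=\pm\eta^{1/4}$ each with probability $1/4$ and $a_i(0)=0$ with probability $1/2$, independently over $i$. Let $\boldsymbol{\theta}(t)=\boldsymbol{a}(t)^\top\boldsymbol{W}(t)$. Then for all $t$, $\mathbb{E}[\boldsymbol{\theta}(t)]=\mathbb{E}[\boldsymbol{\theta}(0)]$.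
   Context: $\boldsymbol{x}_j\in\mathbb{R}^d$, $y_j\in\mathbb{R}$ ($j\in[n]$) are the training data; $\eta>0$ is the step size; $\boldsymbol{W}(0)$ is initialized with i.i.d. entries $\frac1{\sqrt d}\mathcal{N}(0,1)$ independent of $\boldsymbol{a}$. *)

theory Defs
  imports "HOL-Probability.Probability"
begin

(* Vectors in R^d are functions 'd => real ('d finite, d = CARD('d));
   W in R^{m x d} is 'm => 'd => real (row i = W i); data index j ranges over 'n, n = CARD('n). *)

definition theta :: "('m::finite \<Rightarrow> real) \<Rightarrow> ('m \<Rightarrow> 'd::finite \<Rightarrow> real) \<Rightarrow> 'd \<Rightarrow> real" where
  "theta a W = (\<lambda>k. \<Sum>i\<in>UNIV. a i * W i k)"

definition grad :: "('n::finite \<Rightarrow> 'd::finite \<Rightarrow> real) \<Rightarrow> ('n \<Rightarrow> real) \<Rightarrow> ('d \<Rightarrow> real) \<Rightarrow> 'd \<Rightarrow> real" where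
  "grad x y th = (\<lambda>k. (1 / real CARD('n)) *
      (\<Sum>j\<in>UNIV. ((\<Sum>l\<in>UNIV. th l * x j l) - y j) * x j k))"

(* increment delta_i(t); the boolean c is the fair coin used when a_i(t) = 0 *)
definition delta :: "real \<Rightarrow> bool \<Rightarrow> real \<Rightarrow> real" where
  "delta \<eta> c a = (let e = \<eta> powr (1/4) in
     if a = e then - e else if a = - e then e
     else if a = 0 then (if c then e else - e) else 0)"

fun sim :: "real \<Rightarrow> ('n::finite \<Rightarrow> 'd::finite \<Rightarrow> real) \<Rightarrow> ('n \<Rightarrow> real) \<Rightarrow>
    ('m::finite \<Rightarrow> 'd \<Rightarrow> real) \<Rightarrow> ('m \<Rightarrow> real) \<Rightarrow> (nat \<Rightarrow> 'm \<Rightarrow> bool) \<Rightarrow> nat \<Rightarrow>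
    ('m \<Rightarrow> 'd \<Rightarrow> real) \<times> ('m \<Rightarrow> real)" where
  "sim \<eta> x y W0 a0 c 0 = (W0, a0)"
| "sim \<eta> x y W0 a0 c (Suc t) =
     (let (W, a) = sim \<eta> x y W0 a0 c t; g = grad x y (theta a W) in
       ((\<lambda>i k. W i k - \<eta> * a i * g k), (\<lambda>i. a i + delta \<eta> (c t i) (a i))))"

definition theta_at :: "real \<Rightarrow> ('n::finite \<Rightarrow> 'd::finite \<Rightarrow> real) \<Rightarrow> ('n \<Rightarrow> real) \<Rightarrow> nat \<Rightarrow>
    ('m::finite \<Rightarrow> 'd \<Rightarrow> real) \<times> ('m \<Rightarrow> real) \<times> (nat \<Rightarrow> 'm \<Rightarrow> bool) \<Rightarrow> 'd \<Rightarrow> real" where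
  "theta_at \<eta> x y t \<omega> =
     (case sim \<eta> x y (fst \<omega>) (fst (snd \<omega>)) (snd (snd \<omega>)) t of (W, a) \<Rightarrow> theta a W)"

definition W0_measure :: "('m::finite \<Rightarrow> 'd::finite \<Rightarrow> real) measure" where
  "W0_measure = (\<Pi>\<^sub>M i\<in>UNIV. \<Pi>\<^sub>M k\<in>UNIV.
      density lborel (normal_density 0 (1 / sqrt (real CARD('d)))))"

definition a0_pmf :: "real \<Rightarrow> real pmf" where
  "a0_pmf \<eta> = pmf_of_multiset {# \<eta> powr (1/4), - (\<eta> powr (1/4)), 0, 0 #}"

definition a0_measure :: "real \<Rightarrow> ('m::finite \<Rightarrow> real) measure" where
  "a0_measure \<eta> = (\<Pi>\<^sub>M i\<in>UNIV. measure_pmf (a0_pmf \<eta>))"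

definition coin_measure :: "(nat \<Rightarrow> 'm::finite \<Rightarrow> bool) measure" where
  "coin_measure = (\<Pi>\<^sub>M t\<in>UNIV. \<Pi>\<^sub>M i\<in>UNIV. measure_pmf (bernoulli_pmf (1/2)))"

definition sim_space :: "real \<Rightarrow>
    (('m::finite \<Rightarrow> 'd::finite \<Rightarrow> real) \<times> ('m \<Rightarrow> real) \<times> (nat \<Rightarrow> 'm \<Rightarrow> bool)) measure" where
  "sim_space \<eta> = W0_measure \<Otimes>\<^sub>M (a0_measure \<eta> \<Otimes>\<^sub>M coin_measure)"

end

theory Submission imports Defs begin

lemma delta_meas[measurable]:
  assumes [measurable]: "A \<in> borel_measurable N" "B \<in> measurable N (count_space UNIV)"
  shows "(\<lambda>\<omega>. delta \<eta> (B \<omega>) (A \<omega>)) \<in> borel_measurable N"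
  unfolding delta_def Let_def by measurable

lemma sim_Suc':
  "sim \<eta> x y W0 a0 c (Suc t) = (let S = sim \<eta> x y W0 a0 c t in
     ((\<lambda>i k. fst S i k - \<eta> * snd S i * grad x y (theta (snd S) (fst S)) k),
      (\<lambda>i. snd S i + delta \<eta> (c t i) (snd S i))))"
  by (simp add: split_beta Let_def)

lemma sim_meas:
  fixes x :: "'n::finite \<Rightarrow> 'd::finite \<Rightarrow> real" and W0 :: "'m::finite \<Rightarrow> 'd \<Rightarrow> real"
  assumes A: "\<And>i. (\<lambda>\<omega>. a \<omega> i) \<in> borel_measurable N"
    and C: "\<And>s i. s < t \<Longrightarrow> (\<lambda>\<omega>. c \<omega> s i) \<in> measurable N (count_space UNIV)"
  shows "(\<forall>i k. (\<lambda>\<omega>. fst (sim \<eta> x y W0 (a \<omega>) (c \<omega>) t) i k) \<in> borel_measurable N) \<and>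
         (\<forall>i. (\<lambda>\<omega>. snd (sim \<eta> x y W0 (a \<omega>) (c \<omega>) t) i) \<in> borel_measurable N)"
  using C
proof (induction t)
  case 0
  then show ?case using A by simp
next
  case (Suc t)
  have C1[measurable]: "\<And>i. (\<lambda>\<omega>. c \<omega> t i) \<in> measurable N (count_space UNIV)" using Suc.prems by simp
  have IH: "(\<forall>i k. (\<lambda>\<omega>. fst (sim \<eta> x y W0 (a \<omega>) (c \<omega>) t) i k) \<in> borel_measurable N) \<and>
         (\<forall>i. (\<lambda>\<omega>. snd (sim \<eta> x y W0 (a \<omega>) (c \<omega>) t) i) \<in> borel_measurable N)"
    using Suc by simp
  have [measurable]: "\<And>i k. (\<lambda>\<omega>. fst (sim \<eta> x y W0 (a \<omega>) (c \<omega>) t) i k) \<in> borel_measurable N"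
   "\<And>i. (\<lambda>\<omega>. snd (sim \<eta> x y W0 (a \<omega>) (c \<omega>) t) i) \<in> borel_measurable N" using IH by auto
  show ?case unfolding sim_Suc' Let_def grad_def theta_def by simp measurable
qed

lemma sim_cong:
  "(\<And>s. s < t \<Longrightarrow> c s = c' s) \<Longrightarrow> sim \<eta> x y W0 a0 c t = sim \<eta> x y W0 a0 c' t"
  by (induction t) (auto simp: split_beta Let_def)

lemma sim_range:
  assumes "\<And>i. a0 i \<in> {0, \<eta> powr (1/4), - (\<eta> powr (1/4))}" "\<eta> > 0"
  shows "snd (sim \<eta> x y W0 a0 c t) i \<in> {0, \<eta> powr (1/4), - (\<eta> powr (1/4))}"
proof (induction t arbitrary: i)
  case 0 then show ?case using assms by simp
next
  case (Suc t)
  have "\<eta> powr (1/4) > 0" using assms by simp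
  with Suc[of i] show ?case by (auto simp: split_beta Let_def delta_def)
qed


definition pmf_rep :: "'a measure \<Rightarrow> 'b pmf \<Rightarrow> ('b \<Rightarrow> 'a) \<Rightarrow> bool" where
  "pmf_rep M p f \<longleftrightarrow> f \<in> measurable (measure_pmf p) M \<and> M = distr (measure_pmf p) M f"

lemma pmf_rep_pmf: "pmf_rep (measure_pmf p) p (\<lambda>x. x)"
  unfolding pmf_rep_def by (simp add: distr_id2)

lemma pmf_rep_prob: "pmf_rep M p f \<Longrightarrow> prob_space M"
  unfolding pmf_rep_def by (metis measure_pmf.prob_space_distr)

lemma pmf_rep_integral:
  fixes G :: "'a \<Rightarrow> real"
  assumes "pmf_rep M p f" "G \<in> borel_measurable M"
  shows "integral\<^sup>L M G = measure_pmf.expectation p (\<lambda>z. G (f z))"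
proof -
  have m: "f \<in> measurable (measure_pmf p) M" and e: "M = distr (measure_pmf p) M f"
    using assms(1) unfolding pmf_rep_def by auto
  have "integral\<^sup>L M G = integral\<^sup>L (distr (measure_pmf p) M f) G" using e by simp
  also have "\<dots> = measure_pmf.expectation p (\<lambda>z. G (f z))"
    by (rule integral_distr[OF m assms(2)])
  finally show ?thesis .
qed

lemma emeasure_pair_pmf_times:
  "emeasure (measure_pmf (pair_pmf p q)) (U \<times> V) = emeasure (measure_pmf p) U * emeasure (measure_pmf q) V"
proof -
  have "emeasure (measure_pmf (pair_pmf p q)) (U \<times> V) = (\<integral>\<^sup>+z. indicator (U \<times> V) z \<partial>pair_pmf p q)"
    by simp
  also have "\<dots> = (\<integral>\<^sup>+a. \<integral>\<^sup>+b. indicator U a * indicator V b \<partial>q \<partial>p)"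
    by (subst nn_integral_pair_pmf') (simp add: indicator_times)
  also have "\<dots> = (\<integral>\<^sup>+a. indicator U a * emeasure (measure_pmf q) V \<partial>p)"
    by (simp add: nn_integral_cmult)
  also have "\<dots> = emeasure (measure_pmf p) U * emeasure (measure_pmf q) V"
    by (simp add: nn_integral_multc)
  finally show ?thesis .
qed

lemma pmf_rep_pair:
  assumes "pmf_rep M p f" "pmf_rep N q g"
  shows "pmf_rep (M \<Otimes>\<^sub>M N) (pair_pmf p q) (\<lambda>(a,b). (f a, g b))"
proof -
  have mf: "f \<in> measurable (measure_pmf p) M" and ef: "M = distr (measure_pmf p) M f"
    using assms(1) unfolding pmf_rep_def by auto
  have mg: "g \<in> measurable (measure_pmf q) N" and eg: "N = distr (measure_pmf q) N g"
    using assms(2) unfolding pmf_rep_def by auto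
  have meas: "(\<lambda>(a,b). (f a, g b)) \<in> measurable (measure_pmf (pair_pmf p q)) (M \<Otimes>\<^sub>M N)"
    using mf mg by (auto simp: space_pair_measure measurable_def)
  interpret M: prob_space M using pmf_rep_prob[OF assms(1)] .
  interpret N: prob_space N using pmf_rep_prob[OF assms(2)] .
  have "M \<Otimes>\<^sub>M N = distr (measure_pmf (pair_pmf p q)) (M \<Otimes>\<^sub>M N) (\<lambda>(a,b). (f a, g b))"
  proof (rule pair_measure_eqI)
    show "sigma_finite_measure M" "sigma_finite_measure N" by unfold_locales
    show "sets (M \<Otimes>\<^sub>M N) = sets (distr (measure_pmf (pair_pmf p q)) (M \<Otimes>\<^sub>M N) (\<lambda>(a,b). (f a, g b)))"
      by simp
  next
    fix A B assume A: "A \<in> sets M" and B: "B \<in> sets N"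
    have "emeasure (distr (measure_pmf (pair_pmf p q)) (M \<Otimes>\<^sub>M N) (\<lambda>(a,b). (f a, g b))) (A \<times> B)
        = emeasure (measure_pmf (pair_pmf p q)) ((\<lambda>(a,b). (f a, g b)) -` (A \<times> B))"
      using A B meas by (subst emeasure_distr) auto
    also have "(\<lambda>(a,b). (f a, g b)) -` (A \<times> B) = (f -` A) \<times> (g -` B)" by auto
    also have "emeasure (measure_pmf (pair_pmf p q)) \<dots> = emeasure (measure_pmf p) (f -` A) * emeasure (measure_pmf q) (g -` B)"
      by (rule emeasure_pair_pmf_times)
    also have "emeasure (measure_pmf p) (f -` A) = emeasure M A"
      using A mf by (subst ef) (simp add: emeasure_distr)
    also have "emeasure (measure_pmf q) (g -` B) = emeasure N B"
      using B mg by (subst eg) (simp add: emeasure_distr)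
    finally show "emeasure M A * emeasure N B = emeasure (distr (measure_pmf (pair_pmf p q)) (M \<Otimes>\<^sub>M N) (\<lambda>(a,b). (f a, g b))) (A \<times> B)"
      by simp
  qed
  then show ?thesis using meas unfolding pmf_rep_def by simp
qed

lemma pmf_rep_PiM:
  assumes fin: "finite I" and rep: "\<And>i. pmf_rep (M i) (p i) (\<lambda>x. x)"
  shows "pmf_rep (PiM I M) (Pi_pmf I dflt p) (\<lambda>x. restrict x I)"
proof -
  have sp: "space (M i) = UNIV" for i
    using rep[of i] unfolding pmf_rep_def by (auto simp: measurable_def)
  have meas: "(\<lambda>x. restrict x I) \<in> measurable (measure_pmf (Pi_pmf I dflt p)) (PiM I M)"
    by (simp add: space_PiM sp)
  interpret product_prob_space M
    by (intro product_prob_spaceI) (rule pmf_rep_prob[OF rep])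
  have "distr (measure_pmf (Pi_pmf I dflt p)) (PiM I M) (\<lambda>x. restrict x I) = PiM I M"
  proof (rule PiM_eqI)
    show "finite I" by fact
    show "sets (distr (measure_pmf (Pi_pmf I dflt p)) (PiM I M) (\<lambda>x. restrict x I)) = sets (PiM I M)"
      by simp
  next
    fix A assume A: "\<And>i. i \<in> I \<Longrightarrow> A i \<in> sets (M i)"
    have "emeasure (distr (measure_pmf (Pi_pmf I dflt p)) (PiM I M) (\<lambda>x. restrict x I)) (PiE I A)
        = emeasure (measure_pmf (Pi_pmf I dflt p)) ((\<lambda>x. restrict x I) -` PiE I A)"
      using A meas by (subst emeasure_distr) (auto intro!: sets_PiM_I_finite fin)
    also have "(\<lambda>x. restrict x I) -` PiE I A = Pi I A" by (auto simp: PiE_def Pi_def)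
    also have "emeasure (measure_pmf (Pi_pmf I dflt p)) (Pi I A) = (\<Prod>i\<in>I. emeasure (measure_pmf (p i)) (A i))"
      by (simp add: measure_pmf.emeasure_eq_measure measure_Pi_pmf_Pi fin prod_ennreal)
    also have "\<dots> = (\<Prod>i\<in>I. emeasure (M i) (A i))"
    proof (intro prod.cong refl)
      fix i assume "i \<in> I"
      have e: "M i = distr (measure_pmf (p i)) (M i) (\<lambda>x. x)" and m: "(\<lambda>x. x) \<in> measurable (measure_pmf (p i)) (M i)"
        using rep[of i] unfolding pmf_rep_def by auto
      show "emeasure (measure_pmf (p i)) (A i) = emeasure (M i) (A i)"
        using A[OF \<open>i \<in> I\<close>] by (subst e) (simp add: emeasure_distr[OF m])
    qed
    finally show "emeasure (distr (measure_pmf (Pi_pmf I dflt p)) (PiM I M) (\<lambda>x. restrict x I)) (PiE I A) = (\<Prod>i\<in>I. emeasure (M i) (A i))" .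
  qed
  then show ?thesis using meas unfolding pmf_rep_def by simp
qed


lemma exp_pair:
  fixes f :: "'a \<times> 'b \<Rightarrow> real"
  assumes "finite (set_pmf A)" "finite (set_pmf B)"
  shows "measure_pmf.expectation (pair_pmf A B) f =
         measure_pmf.expectation B (\<lambda>b. measure_pmf.expectation A (\<lambda>a. f (a, b)))"
proof -
  have "measure_pmf.expectation (pair_pmf A B) f = (\<Sum>z\<in>set_pmf A \<times> set_pmf B. f z * pmf (pair_pmf A B) z)"
    using assms by (intro integral_measure_pmf_real) auto
  also have "\<dots> = (\<Sum>a\<in>set_pmf A. \<Sum>b\<in>set_pmf B. f (a,b) * (pmf A a * pmf B b))"
    unfolding sum.cartesian_product by (intro sum.cong) (auto simp: pmf_pair)
  also have "\<dots> = (\<Sum>b\<in>set_pmf B. (\<Sum>a\<in>set_pmf A. f (a,b) * pmf A a) * pmf B b)"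
    by (subst sum.swap) (simp add: sum_distrib_right mult.assoc)
  also have "\<dots> = measure_pmf.expectation B (\<lambda>b. measure_pmf.expectation A (\<lambda>a. f (a, b)))"
    using assms by (subst integral_measure_pmf_real[of "set_pmf B"]) (auto intro!: sum.cong simp: integral_measure_pmf_real)
  finally show ?thesis .
qed

lemma exp_pair':
  fixes f :: "'a \<times> 'b \<Rightarrow> real"
  assumes "finite (set_pmf A)" "finite (set_pmf B)"
  shows "measure_pmf.expectation (pair_pmf A B) f =
         measure_pmf.expectation A (\<lambda>a. measure_pmf.expectation B (\<lambda>b. f (a, b)))"
proof -
  have "measure_pmf.expectation (pair_pmf A B) f = (\<Sum>z\<in>set_pmf A \<times> set_pmf B. f z * pmf (pair_pmf A B) z)"
    using assms by (intro integral_measure_pmf_real) auto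
  also have "\<dots> = (\<Sum>a\<in>set_pmf A. \<Sum>b\<in>set_pmf B. f (a,b) * (pmf A a * pmf B b))"
    unfolding sum.cartesian_product by (intro sum.cong) (auto simp: pmf_pair)
  also have "\<dots> = (\<Sum>a\<in>set_pmf A. (\<Sum>b\<in>set_pmf B. f (a,b) * pmf B b) * pmf A a)"
    by (simp add: sum_distrib_right sum_distrib_left mult.assoc mult.commute mult.left_commute)
  also have "\<dots> = measure_pmf.expectation A (\<lambda>a. measure_pmf.expectation B (\<lambda>b. f (a, b)))"
    using assms by (subst integral_measure_pmf_real[of "set_pmf A"]) (auto intro!: sum.cong simp: integral_measure_pmf_real)
  finally show ?thesis .
qed

lemma finite_set_Pi_pmf:
  assumes "finite A" "\<And>i. i \<in> A \<Longrightarrow> finite (set_pmf (p i))"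
  shows "finite (set_pmf (Pi_pmf A dflt p))"
  using assms by (intro finite_subset[OF set_Pi_pmf_subset'] finite_PiE_dflt) auto

lemma step_exp:
  fixes W :: "'m::finite \<Rightarrow> 'd::finite \<Rightarrow> real" and a :: "'m \<Rightarrow> real"
  assumes "\<eta> > 0" "\<And>i. a i \<in> {0, \<eta> powr (1/4), - (\<eta> powr (1/4))}"
  shows "measure_pmf.expectation (Pi_pmf UNIV dflt (\<lambda>_. bernoulli_pmf (1/2)))
     (\<lambda>b. theta (\<lambda>i. a i + delta \<eta> (b i) (a i)) (\<lambda>i k. W i k - \<eta> * a i * g k) k) = 0"
proof -
  define e where "e = \<eta> powr (1/4)"
  have e: "e > 0" using assms(1) by (simp add: e_def)
  let ?Mc = "Pi_pmf (UNIV::'m set) dflt (\<lambda>_. bernoulli_pmf (1/2))"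
  have pt: "theta (\<lambda>i. a i + delta \<eta> (b i) (a i)) (\<lambda>i k. W i k - \<eta> * a i * g k) k
     = (\<Sum>i\<in>UNIV. (if a i = 0 then (if b i then e else - e) * W i k else 0))" for b
    unfolding theta_def
  proof (intro sum.cong refl)
    fix i
    have "a i \<in> {0, e, -e}" using assms(2)[of i] by (simp add: e_def)
    then show "(a i + delta \<eta> (b i) (a i)) * (W i k - \<eta> * a i * g k) =
          (if a i = 0 then (if b i then e else - e) * W i k else 0)"
      using e by (auto simp: delta_def e_def[symmetric] Let_def)
  qed
  have fin: "finite (set_pmf ?Mc)" by simp
  have "measure_pmf.expectation ?Mc (\<lambda>b. \<Sum>i\<in>UNIV. (if a i = 0 then (if b i then e else - e) * W i k else 0))
     = (\<Sum>i\<in>UNIV. measure_pmf.expectation ?Mc (\<lambda>b. (if a i = 0 then (if b i then e else - e) * W i k else 0)))"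
    by (rule Bochner_Integration.integral_sum) (auto intro: integrable_measure_pmf_finite[OF fin])
  also have "\<dots> = (\<Sum>i\<in>(UNIV::'m set). 0::real)"
  proof (intro sum.cong refl)
    fix i
    have "measure_pmf.expectation ?Mc (\<lambda>b. (if a i = 0 then (if b i then e else - e) * W i k else 0))
        = measure_pmf.expectation (map_pmf (\<lambda>b. b i) ?Mc) (\<lambda>c. (if a i = 0 then (if c then e else - e) * W i k else 0))"
      by simp
    also have "map_pmf (\<lambda>b. b i) ?Mc = bernoulli_pmf (1/2)" by (simp add: Pi_pmf_component)
    finally show "measure_pmf.expectation ?Mc (\<lambda>b. (if a i = 0 then (if b i then e else - e) * W i k else 0)) = 0"
      by simp
  qed
  finally show ?thesis by (simp add: pt)
qed


lemma a0_set: "\<eta> > 0 \<Longrightarrow> set_pmf (a0_pmf \<eta>) = {\<eta> powr (1/4), - (\<eta> powr (1/4)), 0}"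
  unfolding a0_pmf_def by (subst set_pmf_of_multiset) auto

lemma a0_exp:
  assumes "\<eta> > 0"
  shows "measure_pmf.expectation (a0_pmf \<eta>) (\<lambda>v. v * c) = 0"
proof -
  define e where "e = \<eta> powr (1/4)"
  have e: "e > 0" using assms by (simp add: e_def)
  have "measure_pmf.expectation (a0_pmf \<eta>) (\<lambda>v. v * c) = (\<Sum>v\<in>{e, -e, 0}. v * c * pmf (a0_pmf \<eta>) v)"
    using a0_set[OF assms] by (intro integral_measure_pmf_real) (auto simp: e_def)
  also have "\<dots> = e * c * pmf (a0_pmf \<eta>) e + (- e) * c * pmf (a0_pmf \<eta>) (-e)"
    using e by simp
  also have "pmf (a0_pmf \<eta>) e = 1/4" unfolding a0_pmf_def e_def using e
    by (subst pmf_of_multiset) (auto simp: e_def)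
  also have "pmf (a0_pmf \<eta>) (-e) = 1/4" unfolding a0_pmf_def e_def using e
    by (subst pmf_of_multiset) (auto simp: e_def)
  finally show ?thesis by simp
qed

lemma pmf_main:
  fixes x :: "'n::finite \<Rightarrow> 'd::finite \<Rightarrow> real" and W0 :: "'m::finite \<Rightarrow> 'd \<Rightarrow> real"
  assumes eta: "\<eta> > 0"
  shows "measure_pmf.expectation
     (pair_pmf (Pi_pmf UNIV undefined (\<lambda>_. a0_pmf \<eta>))
               (Pi_pmf {..<t} undefined (\<lambda>_. Pi_pmf (UNIV::'m set) undefined (\<lambda>_. bernoulli_pmf (1/2)))))
     (\<lambda>z. theta (snd (sim \<eta> x y W0 (fst z) (snd z) t)) (fst (sim \<eta> x y W0 (fst z) (snd z) t)) k) = 0"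
proof -
  define P where "P = Pi_pmf (UNIV::'m set) undefined (\<lambda>_. a0_pmf \<eta>)"
  define Mc where "Mc = Pi_pmf (UNIV::'m set) undefined (\<lambda>_. bernoulli_pmf (1/2))"
  define C where "C = (\<lambda>t::nat. Pi_pmf {..<t} undefined (\<lambda>_. Mc))"
  have finP: "finite (set_pmf P)" unfolding P_def
    by (rule finite_set_Pi_pmf) (auto simp: a0_set[OF eta])
  have finMc: "finite (set_pmf Mc)" by simp
  have finC: "finite (set_pmf (C t))" for t unfolding C_def
    by (rule finite_set_Pi_pmf) (auto simp: finMc)
  have Pset: "a i \<in> {0, \<eta> powr (1/4), - (\<eta> powr (1/4))}" if "a \<in> set_pmf P" for a i
  proof -
    have "a \<in> PiE_dflt UNIV undefined (set_pmf \<circ> (\<lambda>_. a0_pmf \<eta>))"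
      using set_Pi_pmf_subset'[of "UNIV::'m set" undefined "\<lambda>_. a0_pmf \<eta>"] that by (auto simp: P_def)
    then show ?thesis by (auto simp: PiE_dflt_def a0_set[OF eta])
  qed
  show ?thesis
  proof (cases t)
    case 0
    have "measure_pmf.expectation (pair_pmf P (C 0))
       (\<lambda>z. theta (snd (sim \<eta> x y W0 (fst z) (snd z) 0)) (fst (sim \<eta> x y W0 (fst z) (snd z) 0)) k)
       = measure_pmf.expectation P (\<lambda>a. \<Sum>i\<in>UNIV. a i * W0 i k)"
      by (simp add: C_def pair_return_pmf2 theta_def)
    also have "\<dots> = (\<Sum>i\<in>UNIV. measure_pmf.expectation P (\<lambda>a. a i * W0 i k))"
      by (rule Bochner_Integration.integral_sum) (auto intro: integrable_measure_pmf_finite[OF finP])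
    also have "\<dots> = (\<Sum>i\<in>(UNIV::'m set). 0::real)"
    proof (intro sum.cong refl)
      fix i
      have "measure_pmf.expectation P (\<lambda>a. a i * W0 i k) = measure_pmf.expectation (map_pmf (\<lambda>a. a i) P) (\<lambda>v. v * W0 i k)"
        by simp
      also have "map_pmf (\<lambda>a. a i) P = a0_pmf \<eta>" by (simp add: P_def Pi_pmf_component)
      also have "measure_pmf.expectation (a0_pmf \<eta>) (\<lambda>v. v * W0 i k) = 0" by (rule a0_exp[OF eta])
      finally show "measure_pmf.expectation P (\<lambda>a. a i * W0 i k) = 0" .
    qed
    finally show ?thesis using 0 by (simp add: P_def C_def Mc_def)
  next
    case (Suc s)
    let ?G = "\<lambda>z. theta (snd (sim \<eta> x y W0 (fst z) (snd z) (Suc s))) (fst (sim \<eta> x y W0 (fst z) (snd z) (Suc s))) k"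
    have CS: "C (Suc s) = map_pmf (\<lambda>(y,f). f(s:=y)) (pair_pmf Mc (C s))"
      unfolding C_def lessThan_Suc by (subst Pi_pmf_insert) auto
    have inner: "measure_pmf.expectation Mc (\<lambda>b. ?G (a, f(s:=b))) = 0" if "a \<in> set_pmf P" for a f
    proof -
      define S where "S = sim \<eta> x y W0 a f s"
      have sc: "sim \<eta> x y W0 a (f(s:=b)) s = S" for b
        unfolding S_def by (rule sim_cong) auto
      have "?G (a, f(s:=b)) = theta (\<lambda>i. snd S i + delta \<eta> (b i) (snd S i))
              (\<lambda>i k. fst S i k - \<eta> * snd S i * grad x y (theta (snd S) (fst S)) k) k" for b
        by (simp only: sim_Suc' sc Let_def fst_conv snd_conv) simp
      moreover have "measure_pmf.expectation Mc (\<lambda>b. theta (\<lambda>i. snd S i + delta \<eta> (b i) (snd S i))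
              (\<lambda>i k. fst S i k - \<eta> * snd S i * grad x y (theta (snd S) (fst S)) k) k) = 0"
        unfolding Mc_def
        by (rule step_exp[OF eta]) (unfold S_def, rule sim_range[OF Pset[OF that] eta])
      ultimately show ?thesis by simp
    qed
    have "measure_pmf.expectation (pair_pmf P (C (Suc s))) ?G
        = measure_pmf.expectation (pair_pmf P (pair_pmf Mc (C s))) (\<lambda>z. ?G (fst z, (snd (snd z))(s := fst (snd z))))"
      by (simp add: CS pair_map_pmf2 case_prod_beta)
    also have "\<dots> = measure_pmf.expectation P (\<lambda>a. measure_pmf.expectation (pair_pmf Mc (C s)) (\<lambda>w. ?G (a, (snd w)(s := fst w))))"
      using finP finMc finC by (subst exp_pair') auto
    also have "\<dots> = measure_pmf.expectation P (\<lambda>a. measure_pmf.expectation (C s) (\<lambda>f. measure_pmf.expectation Mc (\<lambda>b. ?G (a, f(s:=b)))))"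
      using finMc finC by (subst exp_pair) auto
    also have "\<dots> = measure_pmf.expectation P (\<lambda>a. 0)"
    proof (intro integral_cong_AE AE_pmfI)
      fix a assume "a \<in> set_pmf P"
      note i = inner[OF this]
      show "measure_pmf.expectation (C s) (\<lambda>f. measure_pmf.expectation Mc (\<lambda>b. ?G (a, f(s:=b)))) = 0"
        by (subst i) simp
    qed auto
    finally show ?thesis using Suc by (simp add: P_def C_def Mc_def)
  qed
qed


lemma restrict_UNIV': "(\<lambda>x. restrict x UNIV) = (\<lambda>x. x)"
  by (auto simp: restrict_def fun_eq_iff)

lemma inner_zero:
  fixes x :: "'n::finite \<Rightarrow> 'd::finite \<Rightarrow> real" and W0 :: "'m::finite \<Rightarrow> 'd \<Rightarrow> real"
  assumes eta: "\<eta> > 0"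
  shows "(\<integral>r. theta_at \<eta> x y t (W0, r) k \<partial>(a0_measure \<eta> \<Otimes>\<^sub>M (coin_measure :: (nat \<Rightarrow> 'm \<Rightarrow> bool) measure))) = 0"
proof -
  define M' where "M' = (PiM (UNIV::'m set) (\<lambda>_. measure_pmf (bernoulli_pmf (1/2))))"
  define J where "J = {..<t}"
  define PJ where "PJ = PiM J (\<lambda>_. M')"
  define A where "A = (a0_measure \<eta> :: ('m \<Rightarrow> real) measure)"
  define S where "S = (coin_measure :: (nat \<Rightarrow> 'm \<Rightarrow> bool) measure)"
  define G where "G = (\<lambda>z::('m \<Rightarrow> real) \<times> (nat \<Rightarrow> 'm \<Rightarrow> bool).
      theta (snd (sim \<eta> x y W0 (fst z) (snd z) t)) (fst (sim \<eta> x y W0 (fst z) (snd z) t)) k)"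
  have S_eq: "S = PiM UNIV (\<lambda>_. M')" unfolding S_def coin_measure_def M'_def ..
  have A_eq: "A = PiM UNIV (\<lambda>_. measure_pmf (a0_pmf \<eta>))" unfolding A_def a0_measure_def ..
  have probM': "prob_space M'" unfolding M'_def
    by (rule prob_space_PiM) (rule measure_pmf.prob_space_axioms)
  interpret SP: product_prob_space "\<lambda>_::nat. M'" "UNIV::nat set"
    by (intro product_prob_spaceI probM')
  have probA: "prob_space A" unfolding A_eq
    by (rule prob_space_PiM) (rule measure_pmf.prob_space_axioms)
  have probPJ: "prob_space PJ" unfolding PJ_def
    by (rule prob_space_PiM) (rule probM')
  have finJ: "finite J" by (simp add: J_def)
  have F_eq: "theta_at \<eta> x y t (W0, r) k = G (fst r, restrict (snd r) J)" for r
  proof -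
    have "sim \<eta> x y W0 (fst r) (snd r) t = sim \<eta> x y W0 (fst r) (restrict (snd r) J) t"
      by (rule sim_cong) (simp add: J_def)
    then show ?thesis by (simp add: theta_at_def G_def split_beta)
  qed
  have hmeas: "(\<lambda>(a, c). (a, restrict c J)) \<in> measurable (A \<Otimes>\<^sub>M S) (A \<Otimes>\<^sub>M PJ)"
    unfolding PJ_def S_eq by measurable
  have distr_eq: "distr (A \<Otimes>\<^sub>M S) (A \<Otimes>\<^sub>M PJ) (\<lambda>(a, c). (a, restrict c J)) = A \<Otimes>\<^sub>M PJ"
  proof -
    have d2: "distr S PJ (\<lambda>c. restrict c J) = PJ"
      unfolding S_eq PJ_def by (rule SP.distr_PiM_restrict_finite) (auto simp: finJ)
    have "distr A A (\<lambda>x. x) \<Otimes>\<^sub>M distr S PJ (\<lambda>c. restrict c J) =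
          distr (A \<Otimes>\<^sub>M S) (A \<Otimes>\<^sub>M PJ) (\<lambda>(x, y). (x, restrict y J))"
    proof (rule pair_measure_distr)
      show "(\<lambda>x. x) \<in> measurable A A" by simp
      show "(\<lambda>c. restrict c J) \<in> measurable S PJ" unfolding S_eq PJ_def by (rule measurable_restrict_subset) simp
      show "sigma_finite_measure (distr S PJ (\<lambda>c. restrict c J))"
        unfolding d2 by (rule prob_space_imp_sigma_finite[OF probPJ])
    qed
    then show ?thesis using d2 by simp
  qed
  have Gmeas: "G \<in> borel_measurable (A \<Otimes>\<^sub>M PJ)"
  proof -
    have ca: "(\<lambda>\<omega>. fst \<omega> i) \<in> borel_measurable (A \<Otimes>\<^sub>M PJ)" for i
    proof -
      have "(\<lambda>a. a i) \<in> measurable A (measure_pmf (a0_pmf \<eta>))"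
        unfolding A_eq by (rule measurable_component_singleton) simp
      moreover have "(\<lambda>v. v) \<in> measurable (measure_pmf (a0_pmf \<eta>)) (borel :: real measure)" by simp
      ultimately have "(\<lambda>a. a i) \<in> borel_measurable A" by (rule measurable_compose)
      then show ?thesis by measurable
    qed
    have cc: "(\<lambda>\<omega>. snd \<omega> s i) \<in> measurable (A \<Otimes>\<^sub>M PJ) (count_space UNIV)" if "s < t" for s i
    proof -
      have "(\<lambda>c. c s) \<in> measurable PJ M'"
        unfolding PJ_def by (rule measurable_component_singleton) (simp add: J_def that)
      moreover have "(\<lambda>b. b i) \<in> measurable M' (measure_pmf (bernoulli_pmf (1/2)))"
        unfolding M'_def by (rule measurable_component_singleton) simp
      ultimately have "(\<lambda>c. c s i) \<in> measurable PJ (measure_pmf (bernoulli_pmf (1/2)))"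
        by (rule measurable_compose[where f="\<lambda>c. c s" and g="\<lambda>b. b i"])
      then have "(\<lambda>c. c s i) \<in> measurable PJ (count_space UNIV)" by simp
      then show ?thesis by measurable
    qed
    from sim_meas[of "\<lambda>\<omega>. fst \<omega>" "A \<Otimes>\<^sub>M PJ" t "\<lambda>\<omega>. snd \<omega>" \<eta> x y W0, OF ca cc]
    have [measurable]: "\<And>i k. (\<lambda>\<omega>. fst (sim \<eta> x y W0 (fst \<omega>) (snd \<omega>) t) i k) \<in> borel_measurable (A \<Otimes>\<^sub>M PJ)"
      "\<And>i. (\<lambda>\<omega>. snd (sim \<eta> x y W0 (fst \<omega>) (snd \<omega>) t) i) \<in> borel_measurable (A \<Otimes>\<^sub>M PJ)"
      by auto
    show ?thesis unfolding G_def theta_def by measurable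
  qed
  have rep: "pmf_rep (A \<Otimes>\<^sub>M PJ)
     (pair_pmf (Pi_pmf UNIV undefined (\<lambda>_. a0_pmf \<eta>))
               (Pi_pmf J undefined (\<lambda>_. Pi_pmf (UNIV::'m set) undefined (\<lambda>_. bernoulli_pmf (1/2)))))
     (\<lambda>(a, c). (restrict a UNIV, restrict c J))"
  proof (rule pmf_rep_pair)
    show "pmf_rep A (Pi_pmf UNIV undefined (\<lambda>_. a0_pmf \<eta>)) (\<lambda>a. restrict a UNIV)"
      unfolding A_eq by (rule pmf_rep_PiM) (auto intro: pmf_rep_pmf)
    have "pmf_rep M' (Pi_pmf (UNIV::'m set) undefined (\<lambda>_. bernoulli_pmf (1/2))) (\<lambda>a. restrict a UNIV)"
      unfolding M'_def by (rule pmf_rep_PiM) (auto intro: pmf_rep_pmf)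
    then have "pmf_rep M' (Pi_pmf (UNIV::'m set) undefined (\<lambda>_. bernoulli_pmf (1/2))) (\<lambda>a. a)"
      by (simp add: restrict_UNIV')
    then show "pmf_rep PJ (Pi_pmf J undefined (\<lambda>_. Pi_pmf (UNIV::'m set) undefined (\<lambda>_. bernoulli_pmf (1/2)))) (\<lambda>c. restrict c J)"
      unfolding PJ_def by (rule pmf_rep_PiM[OF finJ])
  qed
  have "(\<integral>r. theta_at \<eta> x y t (W0, r) k \<partial>(A \<Otimes>\<^sub>M S)) = (\<integral>r. G ((\<lambda>(a, c). (a, restrict c J)) r) \<partial>(A \<Otimes>\<^sub>M S))"
    by (simp add: F_eq split_beta)
  also have "\<dots> = integral\<^sup>L (A \<Otimes>\<^sub>M PJ) G"
    by (subst distr_eq[symmetric]) (rule integral_distr[OF hmeas, symmetric], simp add: distr_eq Gmeas)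
  also have "\<dots> = measure_pmf.expectation
     (pair_pmf (Pi_pmf UNIV undefined (\<lambda>_. a0_pmf \<eta>))
               (Pi_pmf J undefined (\<lambda>_. Pi_pmf (UNIV::'m set) undefined (\<lambda>_. bernoulli_pmf (1/2)))))
     (\<lambda>z. G ((\<lambda>(a, c). (restrict a UNIV, restrict c J)) z))"
    by (rule pmf_rep_integral[OF rep Gmeas])
  also have "\<dots> = measure_pmf.expectation
     (pair_pmf (Pi_pmf UNIV undefined (\<lambda>_. a0_pmf \<eta>))
               (Pi_pmf {..<t} undefined (\<lambda>_. Pi_pmf (UNIV::'m set) undefined (\<lambda>_. bernoulli_pmf (1/2)))))
     (\<lambda>z. theta (snd (sim \<eta> x y W0 (fst z) (snd z) t)) (fst (sim \<eta> x y W0 (fst z) (snd z) t)) k)"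
  proof -
    have "G ((\<lambda>(a, c). (restrict a UNIV, restrict c J)) z) = G z" for z
    proof -
      have "sim \<eta> x y W0 (fst z) (restrict (snd z) J) t = sim \<eta> x y W0 (fst z) (snd z) t"
        by (rule sim_cong) (simp add: J_def)
      moreover have "restrict (fst z) UNIV = fst z" by (simp add: restrict_def)
      ultimately show ?thesis by (simp add: G_def split_beta)
    qed
    then show ?thesis by (simp add: G_def J_def)
  qed
  also have "\<dots> = 0" by (rule pmf_main[OF eta])
  finally show ?thesis by (simp add: A_def S_def)
qed


lemma all_zero:
  fixes x :: "'n::finite \<Rightarrow> 'd::finite \<Rightarrow> real"
  assumes eta: "\<eta> > 0"
  shows "(\<integral>\<omega>. theta_at \<eta> x y t \<omega> k
            \<partial>(sim_space \<eta> :: (('m::finite \<Rightarrow> 'd \<Rightarrow> real) \<times> ('m \<Rightarrow> real) \<times> (nat \<Rightarrow> 'm \<Rightarrow> bool)) measure)) = 0"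
proof -
  define R where "R = ((a0_measure \<eta> :: ('m \<Rightarrow> real) measure) \<Otimes>\<^sub>M (coin_measure :: (nat \<Rightarrow> 'm \<Rightarrow> bool) measure))"
  define WM where "WM = (W0_measure :: ('m \<Rightarrow> 'd \<Rightarrow> real) measure)"
  have ss: "(sim_space \<eta> :: (('m \<Rightarrow> 'd \<Rightarrow> real) \<times> ('m \<Rightarrow> real) \<times> (nat \<Rightarrow> 'm \<Rightarrow> bool)) measure) = WM \<Otimes>\<^sub>M R"
    unfolding sim_space_def R_def WM_def ..
  have pW: "prob_space WM" unfolding WM_def W0_measure_def
    by (intro prob_space_PiM prob_space_normal_density) simp
  have pR: "prob_space R" unfolding R_def a0_measure_def coin_measure_def
    by (intro prob_space_pair prob_space_PiM measure_pmf.prob_space_axioms)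
  interpret WM: prob_space WM by (rule pW)
  interpret R: prob_space R by (rule pR)
  interpret P: pair_sigma_finite WM R by unfold_locales
  show ?thesis
  proof (cases "integrable (WM \<Otimes>\<^sub>M R) (\<lambda>\<omega>. theta_at \<eta> x y t \<omega> k)")
    case True
    have "(\<integral>\<omega>. theta_at \<eta> x y t \<omega> k \<partial>(WM \<Otimes>\<^sub>M R)) = (\<integral>W. (\<integral>r. theta_at \<eta> x y t (W, r) k \<partial>R) \<partial>WM)"
      by (rule P.integral_fst'[OF True, symmetric])
    also have "\<dots> = (\<integral>W. 0 \<partial>WM)"
      by (intro Bochner_Integration.integral_cong refl) (unfold R_def, rule inner_zero[OF eta])
    finally show ?thesis by (simp add: ss)
  next
    case False
    then show ?thesis by (simp add: ss not_integrable_integral_eq)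
  qed
qed

theorem lemmaB5:
  fixes \<eta> :: real and x :: "'n::finite \<Rightarrow> 'd::finite \<Rightarrow> real" and y :: "'n \<Rightarrow> real"
    and t :: nat and k :: 'd
  assumes "\<eta> > 0"
  shows "(\<integral>\<omega>. theta_at \<eta> x y t \<omega> k
            \<partial>(sim_space \<eta> :: (('m::finite \<Rightarrow> 'd \<Rightarrow> real) \<times> ('m \<Rightarrow> real) \<times> (nat \<Rightarrow> 'm \<Rightarrow> bool)) measure))
       = (\<integral>\<omega>. theta_at \<eta> x y 0 \<omega> k
            \<partial>(sim_space \<eta> :: (('m \<Rightarrow> 'd \<Rightarrow> real) \<times> ('m \<Rightarrow> real) \<times> (nat \<Rightarrow> 'm \<Rightarrow> bool)) measure))"
  by (simp only: all_zero[OF assms])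

end
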